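(* Let $[L_1],[L_2],[L_3]\in\mathfrak B_3^0$ be distinct, and suppose the lines between $[L_1]$ and $[L_2]$ and between $[L_1]$ and $[L_3]$ are both unbent. Then either the three classes lie in a single apartment, or there exist a basis $e_1,e_2,e_3$ of $L_1$ and integers $t,s,u$ with $0<t<s$ and $t<u$ such that, after possibly exchanging $[L_2]$ and $[L_3]$, the classes $[L_2],[L_3]$ have representatives of one of the following forms: (i) $L_2=R\{e_1,\pi^se_2,\pi^se_3\}$ and $L_3=R\{e_1+\pi^te_2,\pi^ue_2,\pi^ue_3\}$; (ii) $L_2=R\{e_1,\pi^se_2,\pi^se_3\}$ and $L_3=R\{e_1+\pi^te_3,e_2,\pi^ue_3\}$; (iii) $L_2=R\{e_1,e_2,\pi^se_3\}$ and $L_3=R\{e_1+\pi^te_3,e_2,\pi^ue_3\}$. Here $R\{f_1,f_2,f_3\}$ denotes the $R$-span of $f_1,f_2,f_3$.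
   Context: Let $K$ be a field with a discrete valuation $v\colon K^*\to\mathbb Z$, valuation ring $R$, residue field $k$ and uniformizer $\pi$. Let $V$ be a $3$-dimensional $K$-vector space. A lattice is an $R$-submodule of $V$ free of rank $3$; $\mathfrak B_3^0$ is the set of homothety classes $[L]=\{\alpha L:\alpha\in K^*\}$ of lattices. A set of classes lies in a single apartment if there is a basis $f_1,f_2,f_3$ of $V$ such that every class in the set is represented by a lattice $\pi^{m_1}Rf_1+\pi^{m_2}Rf_2+\pi^{m_3}Rf_3$ with $m_i\in\mathbb Z$. For distinct $[L],[M]\in\mathfrak B_3^0$ choose (by the elementary divisor theorem) a basis $e_1,e_2,e_3$ of $V$ and integers $m_1\le m_2\le m_3$ with $L=Re_1+Re_2+Re_3$, $M=\pi^{m_1}Re_1+\pi^{m_2}Re_2+\pi^{m_3}Re_3$; the line between $[L]$ and $[M]$ is bent if $m_1<m_2<m_3$ and unbent otherwise. *)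

theory Defs
  imports "HOL-Analysis.Finite_Cartesian_Product"
begin

text \<open>The 3-dimensional K-vector space V is modelled as K^3 = 'a^3.
  The valuation is v restricted to nonzero elements.\<close>

definition discrete_valuation :: "('a::field \<Rightarrow> int) \<Rightarrow> bool" where
  "discrete_valuation v \<longleftrightarrow>
     (\<forall>x y. x \<noteq> 0 \<longrightarrow> y \<noteq> 0 \<longrightarrow> v (x * y) = v x + v y) \<and>
     (\<forall>x y. x \<noteq> 0 \<longrightarrow> y \<noteq> 0 \<longrightarrow> x + y \<noteq> 0 \<longrightarrow> min (v x) (v y) \<le> v (x + y)) \<and>
     (\<forall>n. \<exists>x. x \<noteq> 0 \<and> v x = n)"

definition valring :: "('a::field \<Rightarrow> int) \<Rightarrow> 'a set" where
  "valring v = {x. x = 0 \<or> 0 \<le> v x}"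

definition sm :: "'a::field \<Rightarrow> 'a^3 \<Rightarrow> 'a^3" where
  "sm c x = (\<chi> i. c * x $ i)"

definition lincomb :: "'a::field \<Rightarrow> 'a \<Rightarrow> 'a \<Rightarrow> 'a^3 \<Rightarrow> 'a^3 \<Rightarrow> 'a^3 \<Rightarrow> 'a^3" where
  "lincomb a b c f1 f2 f3 = sm a f1 + sm b f2 + sm c f3"

definition kbasis :: "'a::field^3 \<Rightarrow> 'a^3 \<Rightarrow> 'a^3 \<Rightarrow> bool" where
  "kbasis f1 f2 f3 \<longleftrightarrow> (\<forall>x. \<exists>a b c. x = lincomb a b c f1 f2 f3) \<and>
     (\<forall>a b c. lincomb a b c f1 f2 f3 = 0 \<longrightarrow> a = 0 \<and> b = 0 \<and> c = 0)"

definition Rspan :: "('a::field \<Rightarrow> int) \<Rightarrow> 'a^3 \<Rightarrow> 'a^3 \<Rightarrow> 'a^3 \<Rightarrow> ('a^3) set" where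
  "Rspan v f1 f2 f3 = {lincomb a b c f1 f2 f3 | a b c.
      a \<in> valring v \<and> b \<in> valring v \<and> c \<in> valring v}"

text \<open>A lattice: R-submodule free of rank 3, i.e. the R-span of an R-basis, which is a K-basis.\<close>
definition is_lattice :: "('a::field \<Rightarrow> int) \<Rightarrow> ('a^3) set \<Rightarrow> bool" where
  "is_lattice v L \<longleftrightarrow> (\<exists>f1 f2 f3. kbasis f1 f2 f3 \<and> L = Rspan v f1 f2 f3)"

definition homothetic :: "('a::field^3) set \<Rightarrow> ('a^3) set \<Rightarrow> bool" where
  "homothetic L M \<longleftrightarrow> (\<exists>\<alpha>. \<alpha> \<noteq> 0 \<and> M = sm \<alpha> ` L)"

text \<open>The line between [L] and [M] is unbent: elementary divisor form with exponents
  m1 \<le> m2 \<le> m3 not strictly increasing.\<close>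
definition unbent :: "('a::field \<Rightarrow> int) \<Rightarrow> 'a \<Rightarrow> ('a^3) set \<Rightarrow> ('a^3) set \<Rightarrow> bool" where
  "unbent v \<pi> L M \<longleftrightarrow> (\<exists>e1 e2 e3 m1 m2 m3. kbasis e1 e2 e3 \<and> L = Rspan v e1 e2 e3 \<and>
      M = Rspan v (sm (\<pi> powi m1) e1) (sm (\<pi> powi m2) e2) (sm (\<pi> powi m3) e3) \<and>
      m1 \<le> m2 \<and> m2 \<le> m3 \<and> \<not> (m1 < m2 \<and> m2 < m3))"

definition in_apartment :: "('a::field \<Rightarrow> int) \<Rightarrow> 'a \<Rightarrow> ('a^3) set set \<Rightarrow> bool" where
  "in_apartment v \<pi> S \<longleftrightarrow> (\<exists>f1 f2 f3. kbasis f1 f2 f3 \<and> (\<forall>L\<in>S. \<exists>m1 m2 m3.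
      homothetic L (Rspan v (sm (\<pi> powi m1) f1) (sm (\<pi> powi m2) f2) (sm (\<pi> powi m3) f3))))"

end

theory Submission
  imports Defs
begin


locale dvr =
  fixes v :: "'a::field \<Rightarrow> int" and p :: 'a
  assumes dv: "discrete_valuation v" and p0: "p \<noteq> 0" and vp: "v p = 1"
begin

abbreviation "R \<equiv> valring v"
definition U :: "'a \<Rightarrow> bool" where "U x \<longleftrightarrow> x \<noteq> 0 \<and> v x = 0"

lemma vmult: "x \<noteq> 0 \<Longrightarrow> y \<noteq> 0 \<Longrightarrow> v (x*y) = v x + v y"
  using dv unfolding discrete_valuation_def by blast
lemma vadd: "x \<noteq> 0 \<Longrightarrow> y \<noteq> 0 \<Longrightarrow> x + y \<noteq> 0 \<Longrightarrow> min (v x) (v y) \<le> v (x+y)"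
  using dv unfolding discrete_valuation_def by blast
lemma v1: "v 1 = 0" using vmult[of 1 1] by simp
lemma vinv: "x \<noteq> 0 \<Longrightarrow> v (inverse x) = - v x"
  using vmult[of x "inverse x"] v1 by simp
lemma vdiv: "x \<noteq> 0 \<Longrightarrow> y \<noteq> 0 \<Longrightarrow> v (x / y) = v x - v y"
  by (simp add: divide_inverse vmult vinv)
lemma vm1: "v (-1) = 0" using vmult[of "-1" "-1"] v1 by simp
lemma vneg: "x \<noteq> 0 \<Longrightarrow> v (- x) = v x"
  using vmult[of "-1" x] vm1 by simp
lemma vpown: "v (p ^ n) = int n"
  by (induction n) (auto simp: v1 vmult p0 vp)
lemma vpowi: "v (p powi n) = n"
proof (cases "n \<ge> 0")
  case True then show ?thesis by (simp add: power_int_def vpown)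
next
  case False then show ?thesis
    by (simp add: power_int_def vpown power_inverse vinv p0)
qed
lemma powi_nz[simp]: "p powi n \<noteq> 0" using p0 by simp

lemma memR: "x \<in> R \<longleftrightarrow> x = 0 \<or> 0 \<le> v x" by (simp add: valring_def)
lemma R0[simp]: "0 \<in> R" by (simp add: memR)
lemma R1[simp]: "1 \<in> R" by (simp add: memR v1)
lemma R_mult[simp,intro]: "x \<in> R \<Longrightarrow> y \<in> R \<Longrightarrow> x * y \<in> R"
  by (cases "x = 0"; cases "y = 0") (auto simp: memR vmult)
lemma R_neg[simp]: "- x \<in> R \<longleftrightarrow> x \<in> R"
  by (cases "x = 0") (auto simp: memR vneg)
lemma R_add[simp,intro]: "x \<in> R \<Longrightarrow> y \<in> R \<Longrightarrow> x + y \<in> R"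
  apply (cases "x = 0"; cases "y = 0"; cases "x + y = 0")
  apply (auto simp: memR)
  using vadd[of x y] by linarith
lemma R_diff[simp,intro]: "x \<in> R \<Longrightarrow> y \<in> R \<Longrightarrow> x - y \<in> R"
  using R_add[of x "-y"] by simp
lemma R_pow[simp,intro]: "0 \<le> n \<Longrightarrow> p powi n \<in> R"
  by (simp add: memR vpowi)
lemma R_p[simp]: "p \<in> R" by (simp add: memR vp)
lemma R_div: "x = 0 \<or> (y \<noteq> 0 \<and> v y \<le> v x) \<Longrightarrow> x / y \<in> R"
  by (cases "x = 0") (auto simp: memR vdiv)
lemma U_R: "U x \<Longrightarrow> x \<in> R" by (simp add: U_def memR)
lemma U_inv: "U x \<Longrightarrow> inverse x \<in> R" by (simp add: U_def memR vinv)
lemma U_inv': "U x \<Longrightarrow> 1 / x \<in> R" using U_inv by (simp add: divide_inverse)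
lemma U_nz: "U x \<Longrightarrow> x \<noteq> 0" by (simp add: U_def)
lemma U_div: "x \<noteq> 0 \<Longrightarrow> y \<noteq> 0 \<Longrightarrow> v x = v y \<Longrightarrow> U (x / y)"
  by (simp add: U_def vdiv)
lemma U_mult: "U x \<Longrightarrow> U y \<Longrightarrow> U (x * y)" by (simp add: U_def vmult)
lemma U_neg: "U x \<Longrightarrow> U (- x)" by (simp add: U_def vneg)
lemma U_1[simp]: "U 1" by (simp add: U_def v1)
lemma R_cases: "x \<in> R \<Longrightarrow> U x \<or> x = 0 \<or> 1 \<le> v x"
  by (auto simp: memR U_def)

end

lemma lc_comp[simp]: "lincomb a b c f1 f2 f3 $ i = a * f1$i + b*f2$i + c*f3$i"
  by (simp add: lincomb_def sm_def)
lemma sm_comp[simp]: "sm c x $ i = c * x $ i" by (simp add: sm_def)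
lemma lc_perm12: "lincomb a b c f1 f2 f3 = lincomb b a c f2 f1 f3"
  by (simp add: vec_eq_iff algebra_simps)
lemma lc_perm23: "lincomb a b c f1 f2 f3 = lincomb a c b f1 f3 f2"
  by (simp add: vec_eq_iff algebra_simps)
lemma lc_diff: "lincomb a b c f1 f2 f3 - lincomb a' b' c' f1 f2 f3 = lincomb (a-a') (b-b') (c-c') f1 f2 f3"
  by (simp add: vec_eq_iff algebra_simps)
lemma lc_lc: "lincomb \<alpha> \<beta> \<gamma> (lincomb a1 b1 c1 f1 f2 f3) (lincomb a2 b2 c2 f1 f2 f3) (lincomb a3 b3 c3 f1 f2 f3)
  = lincomb (\<alpha>*a1+\<beta>*a2+\<gamma>*a3) (\<alpha>*b1+\<beta>*b2+\<gamma>*b3) (\<alpha>*c1+\<beta>*c2+\<gamma>*c3) f1 f2 f3"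
  by (simp add: vec_eq_iff algebra_simps)
lemma sm_lc: "sm k (lincomb a b c f1 f2 f3) = lincomb (k*a) (k*b) (k*c) f1 f2 f3"
  by (simp add: vec_eq_iff algebra_simps)
lemma lc_e1: "f1 = lincomb 1 0 0 f1 f2 f3" by (simp add: vec_eq_iff)
lemma lc_e2: "f2 = lincomb 0 1 0 f1 f2 f3" by (simp add: vec_eq_iff)
lemma lc_e3: "f3 = lincomb 0 0 1 f1 f2 f3" by (simp add: vec_eq_iff)
lemma sm_sm: "sm a (sm b x) = sm (a*b) x" by (simp add: vec_eq_iff)
lemma sm_1[simp]: "sm 1 x = x" by (simp add: vec_eq_iff)

lemma kb_unique: "kbasis f1 f2 f3 \<Longrightarrow> lincomb a b c f1 f2 f3 = lincomb a' b' c' f1 f2 f3 \<Longrightarrow> a = a' \<and> b = b' \<and> c = c'"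
  unfolding kbasis_def using lc_diff[of a b c f1 f2 f3 a' b' c']
  by (metis eq_iff_diff_eq_0)
lemma kb_perm12: "kbasis f1 f2 f3 \<Longrightarrow> kbasis f2 f1 f3"
  unfolding kbasis_def by (metis lc_perm12)
lemma kb_perm23: "kbasis f1 f2 f3 \<Longrightarrow> kbasis f1 f3 f2"
  unfolding kbasis_def by (metis lc_perm23)
lemma kb_rep1:
  assumes kb: "kbasis f1 f2 f3" and a: "(a::'a::field) \<noteq> 0" and g: "g = lincomb a b c f1 f2 f3"
  shows "kbasis g f2 f3"
  unfolding kbasis_def
proof safe
  fix x
  obtain \<alpha> \<beta> \<gamma> where x: "x = lincomb \<alpha> \<beta> \<gamma> f1 f2 f3" using kb unfolding kbasis_def by blast
  have "x = lincomb (\<alpha>/a) (\<beta> - b*\<alpha>/a) (\<gamma> - c*\<alpha>/a) g f2 f3"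
    unfolding x g using a by (simp add: vec_eq_iff field_simps)
  then show "\<exists>a b c. x = lincomb a b c g f2 f3" by blast
next
  fix x y z assume h: "lincomb x y z g f2 f3 = 0"
  have "lincomb x y z g f2 f3 = lincomb (x*a) (x*b+y) (x*c+z) f1 f2 f3"
    unfolding g by (simp add: vec_eq_iff algebra_simps)
  with h kb have "x*a = 0" "x*b+y = 0" "x*c+z = 0" unfolding kbasis_def by metis+
  with a show "x = 0" "y = 0" "z = 0" by auto
qed
lemma kb_rep2: "kbasis f1 f2 f3 \<Longrightarrow> b \<noteq> 0 \<Longrightarrow> g = lincomb a b c f1 f2 f3 \<Longrightarrow> kbasis f1 g f3"
  by (metis kb_perm12 kb_rep1 lc_perm12)
lemma kb_rep3: "kbasis f1 f2 f3 \<Longrightarrow> c \<noteq> 0 \<Longrightarrow> g = lincomb a b c f1 f2 f3 \<Longrightarrow> kbasis f1 f2 g"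
  by (metis kb_perm23 kb_rep2 lc_perm23)

lemma sm_image_Rspan: "sm \<alpha> ` Rspan v f1 f2 f3 = Rspan v (sm \<alpha> f1) (sm \<alpha> f2) (sm \<alpha> f3)"
proof -
  have e: "sm \<alpha> (lincomb a b c f1 f2 f3) = lincomb a b c (sm \<alpha> f1) (sm \<alpha> f2) (sm \<alpha> f3)" for a b c
    by (simp add: vec_eq_iff algebra_simps)
  show ?thesis
  proof
    show "sm \<alpha> ` Rspan v f1 f2 f3 \<subseteq> Rspan v (sm \<alpha> f1) (sm \<alpha> f2) (sm \<alpha> f3)"
    proof
      fix y assume "y \<in> sm \<alpha> ` Rspan v f1 f2 f3"
      then obtain a b c where abc: "a \<in> valring v" "b \<in> valring v" "c \<in> valring v"
        "y = sm \<alpha> (lincomb a b c f1 f2 f3)" unfolding Rspan_def by blast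
      then have "y = lincomb a b c (sm \<alpha> f1) (sm \<alpha> f2) (sm \<alpha> f3)" using e by simp
      then show "y \<in> Rspan v (sm \<alpha> f1) (sm \<alpha> f2) (sm \<alpha> f3)" unfolding Rspan_def using abc by blast
    qed
    show "Rspan v (sm \<alpha> f1) (sm \<alpha> f2) (sm \<alpha> f3) \<subseteq> sm \<alpha> ` Rspan v f1 f2 f3"
    proof
      fix y assume "y \<in> Rspan v (sm \<alpha> f1) (sm \<alpha> f2) (sm \<alpha> f3)"
      then obtain a b c where abc: "a \<in> valring v" "b \<in> valring v" "c \<in> valring v"
        "y = lincomb a b c (sm \<alpha> f1) (sm \<alpha> f2) (sm \<alpha> f3)" unfolding Rspan_def by blast
      have "lincomb a b c f1 f2 f3 \<in> Rspan v f1 f2 f3" unfolding Rspan_def using abc by blast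
      then show "y \<in> sm \<alpha> ` Rspan v f1 f2 f3" using abc(4) e by (metis image_eqI)
    qed
  qed
qed
lemma hom_refl: "homothetic L L"
  unfolding homothetic_def by (rule exI[of _ 1]) (simp add: image_def)
lemma hom_trans: "homothetic L M \<Longrightarrow> homothetic M N \<Longrightarrow> homothetic L N"
  unfolding homothetic_def
  apply clarify
  subgoal for a b by (rule exI[of _ "b*a"]) (auto simp: image_image sm_sm)
  done
lemma hom_sym: "homothetic L M \<Longrightarrow> homothetic M L"
  unfolding homothetic_def
  apply clarify
  subgoal for a by (rule exI[of _ "inverse a"]) (auto simp: image_image sm_sm)
  done

context dvr begin

lemma mem_Rspan: "x \<in> Rspan v f1 f2 f3 \<longleftrightarrow> (\<exists>a b c. a \<in> R \<and> b \<in> R \<and> c \<in> R \<and> x = lincomb a b c f1 f2 f3)"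
  unfolding Rspan_def by blast
lemma memI: "a \<in> R \<Longrightarrow> b \<in> R \<Longrightarrow> c \<in> R \<Longrightarrow> x = lincomb a b c f1 f2 f3 \<Longrightarrow> x \<in> Rspan v f1 f2 f3"
  unfolding Rspan_def by blast
lemma Rspan_sub:
  assumes "g1 \<in> Rspan v f1 f2 f3" "g2 \<in> Rspan v f1 f2 f3" "g3 \<in> Rspan v f1 f2 f3"
  shows "Rspan v g1 g2 g3 \<subseteq> Rspan v f1 f2 f3"
proof
  fix x assume "x \<in> Rspan v g1 g2 g3"
  then obtain \<alpha> \<beta> \<gamma> where x: "\<alpha> \<in> R" "\<beta> \<in> R" "\<gamma> \<in> R" "x = lincomb \<alpha> \<beta> \<gamma> g1 g2 g3"
    unfolding mem_Rspan by blast
  obtain a1 b1 c1 where 1: "a1 \<in> R" "b1 \<in> R" "c1 \<in> R" "g1 = lincomb a1 b1 c1 f1 f2 f3"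
    using assms(1) unfolding mem_Rspan by blast
  obtain a2 b2 c2 where 2: "a2 \<in> R" "b2 \<in> R" "c2 \<in> R" "g2 = lincomb a2 b2 c2 f1 f2 f3"
    using assms(2) unfolding mem_Rspan by blast
  obtain a3 b3 c3 where 3: "a3 \<in> R" "b3 \<in> R" "c3 \<in> R" "g3 = lincomb a3 b3 c3 f1 f2 f3"
    using assms(3) unfolding mem_Rspan by blast
  show "x \<in> Rspan v f1 f2 f3"
    unfolding x(4) 1(4) 2(4) 3(4) lc_lc using x 1 2 3 by (intro memI[OF _ _ _ refl]) auto
qed
lemma gen1: "f1 \<in> Rspan v f1 f2 f3" by (rule memI[of 1 0 0]) (auto simp: vec_eq_iff)
lemma gen2: "f2 \<in> Rspan v f1 f2 f3" by (rule memI[of 0 1 0]) (auto simp: vec_eq_iff)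
lemma gen3: "f3 \<in> Rspan v f1 f2 f3" by (rule memI[of 0 0 1]) (auto simp: vec_eq_iff)
lemma Rspan_eqI:
  assumes "g1 \<in> Rspan v f1 f2 f3" "g2 \<in> Rspan v f1 f2 f3" "g3 \<in> Rspan v f1 f2 f3"
   "f1 \<in> Rspan v g1 g2 g3" "f2 \<in> Rspan v g1 g2 g3" "f3 \<in> Rspan v g1 g2 g3"
  shows "Rspan v g1 g2 g3 = Rspan v f1 f2 f3"
  using Rspan_sub assms by (meson subset_antisym)
lemma Rspan_perm12: "Rspan v f1 f2 f3 = Rspan v f2 f1 f3"
  by (rule Rspan_eqI) (simp_all add: gen1 gen2 gen3)
lemma Rspan_perm23: "Rspan v f1 f2 f3 = Rspan v f1 f3 f2"
  by (rule Rspan_eqI) (simp_all add: gen1 gen2 gen3)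
lemma Rspan_rep1:
  assumes a: "U a" and bc: "b \<in> R" "c \<in> R" and g: "g = lincomb a b c f1 f2 f3"
  shows "Rspan v g f2 f3 = Rspan v f1 f2 f3"
proof (rule Rspan_eqI)
  show "g \<in> Rspan v f1 f2 f3" using g a bc U_R by (intro memI) auto
  show "f2 \<in> Rspan v f1 f2 f3" "f3 \<in> Rspan v f1 f2 f3" "f2 \<in> Rspan v g f2 f3" "f3 \<in> Rspan v g f2 f3"
    by (auto simp: gen2 gen3)
  have "f1 = lincomb (1/a) (- b/a) (- c/a) g f2 f3" using g U_nz[OF a]
    by (simp add: vec_eq_iff field_simps)
  moreover have "1/a \<in> R" "- b/a \<in> R" "- c/a \<in> R" using U_inv'[OF a] bc
    by (metis R_mult R_neg times_divide_eq_right mult_1_right minus_divide_left)+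
  ultimately show "f1 \<in> Rspan v g f2 f3" by (intro memI) auto
qed
lemma Rspan_rep2:
  assumes "U b" "a \<in> R" "c \<in> R" "g = lincomb a b c f1 f2 f3"
  shows "Rspan v f1 g f3 = Rspan v f1 f2 f3"
proof -
  have "Rspan v f1 g f3 = Rspan v g f1 f3" by (rule Rspan_perm12)
  also have "\<dots> = Rspan v f2 f1 f3" by (rule Rspan_rep1[OF assms(1-3)]) (simp add: assms(4) lc_perm12)
  also have "\<dots> = Rspan v f1 f2 f3" by (rule Rspan_perm12)
  finally show ?thesis .
qed
lemma Rspan_rep3:
  assumes "U c" "a \<in> R" "b \<in> R" "g = lincomb a b c f1 f2 f3"
  shows "Rspan v f1 f2 g = Rspan v f1 f2 f3"
proof -
  have "Rspan v f1 f2 g = Rspan v f1 g f2" by (rule Rspan_perm23)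
  also have "\<dots> = Rspan v f1 f3 f2" by (rule Rspan_rep2[OF assms(1-3)]) (simp add: assms(4) lc_perm23)
  also have "\<dots> = Rspan v f1 f2 f3" by (rule Rspan_perm23)
  finally show ?thesis .
qed

lemma tr_line_sub:
  assumes "Rspan v x g2 g3 = Rspan v x f2 f3" "\<alpha> \<in> R"
  shows "Rspan v x (sm \<alpha> g2) (sm \<alpha> g3) \<subseteq> Rspan v x (sm \<alpha> f2) (sm \<alpha> f3)"
proof (rule Rspan_sub)
  show "x \<in> Rspan v x (sm \<alpha> f2) (sm \<alpha> f3)" by (rule gen1)
  have "g2 \<in> Rspan v x f2 f3" using assms(1) gen2[of g2 x g3] by simp
  then obtain a b c where 2: "a \<in> R" "b \<in> R" "c \<in> R" "g2 = lincomb a b c x f2 f3"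
    unfolding mem_Rspan by blast
  show "sm \<alpha> g2 \<in> Rspan v x (sm \<alpha> f2) (sm \<alpha> f3)"
    using 2 assms(2) by (intro memI[of "\<alpha>*a" b c]) (auto simp: vec_eq_iff algebra_simps)
  have "g3 \<in> Rspan v x f2 f3" using assms(1) gen3[of g3 x g2] by simp
  then obtain a b c where 3: "a \<in> R" "b \<in> R" "c \<in> R" "g3 = lincomb a b c x f2 f3"
    unfolding mem_Rspan by blast
  show "sm \<alpha> g3 \<in> Rspan v x (sm \<alpha> f2) (sm \<alpha> f3)"
    using 3 assms(2) by (intro memI[of "\<alpha>*a" b c]) (auto simp: vec_eq_iff algebra_simps)
qed
lemma tr_line: "Rspan v x g2 g3 = Rspan v x f2 f3 \<Longrightarrow> \<alpha> \<in> R \<Longrightarrow>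
   Rspan v x (sm \<alpha> g2) (sm \<alpha> g3) = Rspan v x (sm \<alpha> f2) (sm \<alpha> f3)"
  using tr_line_sub[of x g2 g3 f2 f3 \<alpha>] tr_line_sub[of x f2 f3 g2 g3 \<alpha>] by auto
lemma tr_plane_sub:
  assumes "Rspan v x y g = Rspan v x y f" "\<alpha> \<in> R"
  shows "Rspan v x y (sm \<alpha> g) \<subseteq> Rspan v x y (sm \<alpha> f)"
proof (rule Rspan_sub)
  show "x \<in> Rspan v x y (sm \<alpha> f)" by (rule gen1)
  show "y \<in> Rspan v x y (sm \<alpha> f)" by (rule gen2)
  have "g \<in> Rspan v x y f" using assms(1) gen3[of g x y] by simp
  then obtain a b c where 3: "a \<in> R" "b \<in> R" "c \<in> R" "g = lincomb a b c x y f"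
    unfolding mem_Rspan by blast
  show "sm \<alpha> g \<in> Rspan v x y (sm \<alpha> f)"
    using 3 assms(2) by (intro memI[of "\<alpha>*a" "\<alpha>*b" c]) (auto simp: vec_eq_iff algebra_simps)
qed
lemma tr_plane: "Rspan v x y g = Rspan v x y f \<Longrightarrow> \<alpha> \<in> R \<Longrightarrow>
   Rspan v x y (sm \<alpha> g) = Rspan v x y (sm \<alpha> f)"
  using tr_plane_sub[of x y g f \<alpha>] tr_plane_sub[of x y f g \<alpha>] by auto

lemma coeffsR:
  assumes "kbasis e1 e2 e3" "g \<in> Rspan v e1 e2 e3" "g = lincomb a b c e1 e2 e3"
  shows "a \<in> R" "b \<in> R" "c \<in> R"
  using assms kb_unique unfolding mem_Rspan by metis+

lemma prim:
  assumes kg: "kbasis g1 g2 g3" and ke: "kbasis e1 e2 e3"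
    and eq: "Rspan v g1 g2 g3 = Rspan v e1 e2 e3" and g: "g1 = lincomb a b c e1 e2 e3"
  shows "U a \<or> U b \<or> U c"
proof (rule ccontr)
  assume nu: "\<not> (U a \<or> U b \<or> U c)"
  have R: "a \<in> R" "b \<in> R" "c \<in> R" using coeffsR[OF ke _ g] gen1[of g1 g2 g3] eq by auto
  have d: "x \<in> R \<Longrightarrow> \<not> U x \<Longrightarrow> x / p \<in> R" for x
    using R_cases[of x] by (intro R_div) (auto simp: vp p0)
  have "lincomb (a/p) (b/p) (c/p) e1 e2 e3 \<in> Rspan v e1 e2 e3"
    using d R nu by (intro memI[OF _ _ _ refl]) auto
  then have "lincomb (a/p) (b/p) (c/p) e1 e2 e3 \<in> Rspan v g1 g2 g3" using eq by simp
  then obtain x y z where xyz: "x \<in> R" "y \<in> R" "z \<in> R"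
     "lincomb (a/p) (b/p) (c/p) e1 e2 e3 = lincomb x y z g1 g2 g3" unfolding mem_Rspan by blast
  have "g1 = sm p (lincomb (a/p) (b/p) (c/p) e1 e2 e3)" using g p0 by (simp add: vec_eq_iff field_simps)
  also have "\<dots> = lincomb (p*x) (p*y) (p*z) g1 g2 g3" by (simp add: xyz(4) sm_lc)
  finally have "lincomb 1 0 0 g1 g2 g3 = lincomb (p*x) (p*y) (p*z) g1 g2 g3" by (metis lc_e1)
  then have "p * x = 1" using kb_unique[OF kg] by metis
  then have x0: "x \<noteq> 0" by auto
  have "v p + v x = 0" using vmult[OF p0 x0] v1 \<open>p * x = 1\<close> by simp
  with xyz(1) x0 vp show False by (auto simp: memR)
qed

end




definition forms :: "('a::field \<Rightarrow> int) \<Rightarrow> 'a \<Rightarrow> 'a^3 \<Rightarrow> 'a^3 \<Rightarrow> 'a^3 \<Rightarrow> int \<Rightarrow> int \<Rightarrow> int \<Rightarrow> ('a^3) set \<Rightarrow> ('a^3) set \<Rightarrow> bool" where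
 "forms v \<pi> e1 e2 e3 t s u A B \<longleftrightarrow>
         ((A = Rspan v e1 (sm (\<pi> powi s) e2) (sm (\<pi> powi s) e3) \<and>
           B = Rspan v (e1 + sm (\<pi> powi t) e2) (sm (\<pi> powi u) e2) (sm (\<pi> powi u) e3)) \<or>
          (A = Rspan v e1 (sm (\<pi> powi s) e2) (sm (\<pi> powi s) e3) \<and>
           B = Rspan v (e1 + sm (\<pi> powi t) e3) e2 (sm (\<pi> powi u) e3)) \<or>
          (A = Rspan v e1 e2 (sm (\<pi> powi s) e3) \<and>
           B = Rspan v (e1 + sm (\<pi> powi t) e3) e2 (sm (\<pi> powi u) e3)))"

definition concl :: "('a::field \<Rightarrow> int) \<Rightarrow> 'a \<Rightarrow> ('a^3) set \<Rightarrow> ('a^3) set \<Rightarrow> ('a^3) set \<Rightarrow> bool" where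
 "concl v \<pi> L1 L2 L3 \<longleftrightarrow> in_apartment v \<pi> {L1, L2, L3} \<or>
    (\<exists>e1 e2 e3 t s u. kbasis e1 e2 e3 \<and> L1 = Rspan v e1 e2 e3 \<and>
       0 < t \<and> t < s \<and> t < u \<and>
       (\<exists>A B. ((homothetic L2 A \<and> homothetic L3 B) \<or> (homothetic L3 A \<and> homothetic L2 B)) \<and>
         forms v \<pi> e1 e2 e3 t s u A B))"

lemma apart_sym: "in_apartment v \<pi> {L1, L2, L3} \<Longrightarrow> in_apartment v \<pi> {L1, L3, L2}"
  by (simp add: insert_commute)

lemma concl_sym: "concl v \<pi> L1 L2 L3 \<Longrightarrow> concl v \<pi> L1 L3 L2"
  unfolding concl_def
  apply (elim disjE)
   apply (rule disjI1, erule apart_sym)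
  apply (rule disjI2)
  apply (elim exE conjE)
  subgoal for e1 e2 e3 t s u A B
    apply (rule exI[of _ e1], rule exI[of _ e2], rule exI[of _ e3], rule exI[of _ t], rule exI[of _ s], rule exI[of _ u])
    apply (intro conjI, assumption+)
    apply (rule exI[of _ A], rule exI[of _ B])
    by blast
  done

lemma in_apart_hom: "in_apartment v \<pi> {L1, L2, L3} \<Longrightarrow> homothetic L2 L2' \<Longrightarrow> in_apartment v \<pi> {L1, L2', L3}"
  unfolding in_apartment_def
  apply (elim exE conjE)
  subgoal for f1 f2 f3
    apply (rule exI[of _ f1], rule exI[of _ f2], rule exI[of _ f3])
    apply (intro conjI, assumption)
    apply (simp only: ball_simps)
    by (meson hom_sym hom_trans)
  done

lemma concl_hom2: "concl v \<pi> L1 L2 L3 \<Longrightarrow> homothetic L2 L2' \<Longrightarrow> concl v \<pi> L1 L2' L3"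
  unfolding concl_def
  apply (elim disjE)
   apply (rule disjI1, erule in_apart_hom, assumption)
  apply (rule disjI2)
  apply (elim exE conjE)
  subgoal for e1 e2 e3 t s u A B
    apply (rule exI[of _ e1], rule exI[of _ e2], rule exI[of _ e3], rule exI[of _ t], rule exI[of _ s], rule exI[of _ u])
    apply (intro conjI, assumption+)
    apply (rule exI[of _ A], rule exI[of _ B])
    by (meson hom_sym hom_trans)
  done

context dvr begin

abbreviation P :: "int \<Rightarrow> 'a^3 \<Rightarrow> 'a^3" where "P n x \<equiv> sm (p powi n) x"

lemma apart3:
  assumes "kbasis f1 f2 f3" "L1 = Rspan v f1 f2 f3"
    "L2 = Rspan v (P a1 f1) (P a2 f2) (P a3 f3)" "L3 = Rspan v (P b1 f1) (P b2 f2) (P b3 f3)"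
  shows "concl v p L1 L2 L3"
proof -
  have 1: "\<exists>m1 m2 m3. homothetic L1 (Rspan v (P m1 f1) (P m2 f2) (P m3 f3))"
    by (rule exI[of _ 0], rule exI[of _ 0], rule exI[of _ 0]) (simp add: assms hom_refl)
  have 2: "\<exists>m1 m2 m3. homothetic L2 (Rspan v (P m1 f1) (P m2 f2) (P m3 f3))"
    by (rule exI[of _ a1], rule exI[of _ a2], rule exI[of _ a3]) (simp add: assms hom_refl)
  have 3: "\<exists>m1 m2 m3. homothetic L3 (Rspan v (P m1 f1) (P m2 f2) (P m3 f3))"
    by (rule exI[of _ b1], rule exI[of _ b2], rule exI[of _ b3]) (simp add: assms hom_refl)
  have "in_apartment v p {L1, L2, L3}"
    unfolding in_apartment_def
    by (rule exI[of _ f1], rule exI[of _ f2], rule exI[of _ f3]) (simp only: ball_simps 1 2 3 assms(1))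
  then show ?thesis unfolding concl_def by blast
qed

lemma formI:
  assumes "kbasis e1 e2 e3" "L1 = Rspan v e1 e2 e3" "0 < t" "t < s" "t < u"
    "forms v p e1 e2 e3 t s u L2 L3"
  shows "concl v p L1 L2 L3"
  unfolding concl_def
  apply (rule disjI2)
  apply (rule exI[of _ e1], rule exI[of _ e2], rule exI[of _ e3], rule exI[of _ t], rule exI[of _ s], rule exI[of _ u])
  apply (intro conjI assms(1-5))
  apply (rule exI[of _ L2], rule exI[of _ L3])
  using assms(6) hom_refl by blast

lemma form1:
  assumes "kbasis e1 e2 e3" "L1 = Rspan v e1 e2 e3" "0 < t" "t < s" "t < u"
    "L2 = Rspan v e1 (P s e2) (P s e3)" "L3 = Rspan v (e1 + P t e2) (P u e2) (P u e3)"
  shows "concl v p L1 L2 L3"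
  by (rule formI[OF assms(1-5)]) (simp add: forms_def assms(6,7))
lemma form2:
  assumes "kbasis e1 e2 e3" "L1 = Rspan v e1 e2 e3" "0 < t" "t < s" "t < u"
    "L2 = Rspan v e1 (P s e2) (P s e3)" "L3 = Rspan v (e1 + P t e3) e2 (P u e3)"
  shows "concl v p L1 L2 L3"
  by (rule formI[OF assms(1-5)]) (simp add: forms_def assms(6,7))
lemma form3:
  assumes "kbasis e1 e2 e3" "L1 = Rspan v e1 e2 e3" "0 < t" "t < s" "t < u"
    "L2 = Rspan v e1 e2 (P s e3)" "L3 = Rspan v (e1 + P t e3) e2 (P u e3)"
  shows "concl v p L1 L2 L3"
  by (rule formI[OF assms(1-5)]) (simp add: forms_def assms(6,7))

lemma U_pow_div: "x \<noteq> 0 \<Longrightarrow> U (x / p powi (v x))"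
  by (rule U_div) (auto simp: vpowi p0)
lemma R_pow_div: "x = 0 \<or> n \<le> v x \<Longrightarrow> x / p powi n \<in> R"
  by (rule R_div) (auto simp: vpowi p0)
lemma R_upow_div: "U A \<Longrightarrow> x = 0 \<or> n \<le> v x \<Longrightarrow> x / (A * p powi n) \<in> R"
  by (rule R_div) (auto simp: vpowi U_def vmult p0)
lemma U_upow_div: "U A \<Longrightarrow> x \<noteq> 0 \<Longrightarrow> U (x / (A * p powi (v x)))"
  by (rule U_div) (auto simp: vpowi U_def vmult p0)

end


context dvr begin
lemmas p0s[simp] = p0

lemma LL_A:
  assumes ke: "kbasis e1 e2 e3" and kf: "kbasis f1 f2 f3" and eq: "Rspan v f1 f2 f3 = Rspan v e1 e2 e3"
    and s: "0 \<le> s" and u: "0 \<le> u"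
    and y: "f1 = lincomb a b c e1 e2 e3" and b: "U b" and ac: "a \<in> R" "c \<in> R"
  shows "concl v p (Rspan v e1 e2 e3) (Rspan v e1 (P s e2) (P s e3)) (Rspan v f1 (P u f2) (P u f3))"
proof (rule apart3[where ?f1.0=e1 and ?f2.0=f1 and ?f3.0=e3 and ?a1.0=0 and ?a2.0=s and ?a3.0=s and ?b1.0=u and ?b2.0=0 and ?b3.0=u])
  show "kbasis e1 f1 e3" by (rule kb_rep2[OF ke U_nz[OF b] y])
  have r: "Rspan v e1 f1 e3 = Rspan v e1 e2 e3" by (rule Rspan_rep2[OF b ac y])
  then show "Rspan v e1 e2 e3 = Rspan v e1 f1 e3" by simp
  have "Rspan v e1 (P s f1) (P s e3) = Rspan v e1 (P s e2) (P s e3)"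
    by (rule Rspan_rep2[OF b, where a="p powi s * a" and c=c]) (use ac s in \<open>auto simp: y vec_eq_iff algebra_simps\<close>)
  then show "Rspan v e1 (P s e2) (P s e3) = Rspan v (P 0 e1) (P s f1) (P s e3)" by simp
  have "Rspan v f1 e1 e3 = Rspan v e1 f1 e3" by (rule Rspan_perm12)
  also have "\<dots> = Rspan v f1 f2 f3" using r eq by simp
  finally have "Rspan v f1 (P u e1) (P u e3) = Rspan v f1 (P u f2) (P u f3)"
    by (rule tr_line) (use u in simp)
  moreover have "Rspan v (P u e1) f1 (P u e3) = Rspan v f1 (P u e1) (P u e3)" by (rule Rspan_perm12)
  ultimately show "Rspan v f1 (P u f2) (P u f3) = Rspan v (P u e1) (P 0 f1) (P u e3)" by simp
qed

lemma LL_C: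
  assumes ke: "kbasis e1 e2 e3" and eqy: "Rspan v y g2 g3 = Rspan v e1 e2 e3"
    and y: "y = lincomb 1 b c e1 e2 e3" and bR: "b \<in> R" and cR: "c \<in> R"
    and W: "c = 0 \<or> (b \<noteq> 0 \<and> v b \<le> v c)" and s: "0 < s" and u: "0 < u"
    and bn: "b = 0 \<or> 1 \<le> v b"
  shows "concl v p (Rspan v e1 e2 e3) (Rspan v e1 (P s e2) (P s e3)) (Rspan v y (P u g2) (P u g3))"
proof -
  have ry: "Rspan v y e2 e3 = Rspan v e1 e2 e3" by (rule Rspan_rep1[OF U_1 bR cR y])
  have ky: "kbasis y e2 e3" by (rule kb_rep1[OF ke _ y]) simp
  have L3: "Rspan v y (P u g2) (P u g3) = Rspan v y (P u e2) (P u e3)"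
    by (rule tr_line) (use eqy ry u in simp_all)
  show ?thesis
  proof (cases "b = 0")
    case True
    with W have c0: "c = 0" by auto
    have "y = e1" using y True c0 by (simp add: vec_eq_iff)
    then show ?thesis unfolding L3
      by (intro apart3[where ?f1.0=e1 and ?f2.0=e2 and ?f3.0=e3 and ?a1.0=0 and ?a2.0=s and ?a3.0=s and ?b1.0=0 and ?b2.0=u and ?b3.0=u] ke) simp_all
  next
    case b0: False
    define t where "t = v b"
    have t1: "1 \<le> t" using bn b0 t_def by auto
    have tc: "c = 0 \<or> t \<le> v c" using W t_def by auto
    consider "s \<le> t" | "u \<le> t" | "t < s" "t < u" by linarith
    then show ?thesis
    proof cases
      case 1
      have "Rspan v y (P s e2) (P s e3) = Rspan v e1 (P s e2) (P s e3)"
        by (rule Rspan_rep1[OF U_1, where b="b / p powi s" and c="c / p powi s"])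
          (use 1 tc t_def b0 in \<open>auto intro!: R_pow_div simp: y vec_eq_iff field_simps p0\<close>)
      then show ?thesis unfolding L3
        by (intro apart3[where ?f1.0=y and ?f2.0=e2 and ?f3.0=e3 and ?a1.0=0 and ?a2.0=s and ?a3.0=s and ?b1.0=0 and ?b2.0=u and ?b3.0=u] ky) (simp_all add: ry)
    next
      case 2
      have "Rspan v y (P u e2) (P u e3) = Rspan v e1 (P u e2) (P u e3)"
        by (rule Rspan_rep1[OF U_1, where b="b / p powi u" and c="c / p powi u"])
          (use 2 tc t_def b0 in \<open>auto intro!: R_pow_div simp: y vec_eq_iff field_simps p0\<close>)
      then show ?thesis unfolding L3
        by (intro apart3[where ?f1.0=e1 and ?f2.0=e2 and ?f3.0=e3 and ?a1.0=0 and ?a2.0=s and ?a3.0=s and ?b1.0=0 and ?b2.0=u and ?b3.0=u] ke) simp_all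
    next
      case 3
      define e2' where "e2' = lincomb 0 (b / p powi t) (c / p powi t) e1 e2 e3"
      have Ub: "U (b / p powi t)" using U_pow_div[OF b0] t_def by simp
      have Rc: "c / p powi t \<in> R" using R_pow_div tc by blast
      have k': "kbasis e1 e2' e3" by (rule kb_rep2[OF ke U_nz[OF Ub] e2'_def])
      have r': "Rspan v e1 e2' e3 = Rspan v e1 e2 e3" by (rule Rspan_rep2[OF Ub _ Rc e2'_def]) simp
      have L2: "Rspan v e1 (P s e2') (P s e3) = Rspan v e1 (P s e2) (P s e3)"
        by (rule Rspan_rep2[OF Ub R0 Rc]) (auto simp: e2'_def vec_eq_iff algebra_simps)
      have yv: "y = e1 + P t e2'" using y by (simp add: e2'_def vec_eq_iff field_simps)
      have "Rspan v y e2' e3 = Rspan v e1 e2' e3"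
      proof (rule Rspan_rep1[OF U_1])
        show "p powi t \<in> R" using t1 by simp
        show "y = lincomb 1 (p powi t) 0 e1 e2' e3" unfolding yv by (simp add: vec_eq_iff)
      qed simp
      then have "Rspan v y (P u e2') (P u e3) = Rspan v y (P u e2) (P u e3)"
        by (intro tr_line) (use r' ry u in simp_all)
      then show ?thesis unfolding L3
        by (intro form1[OF k' r'[symmetric] _ 3]) (use t1 L2 yv in auto)
    qed
  qed
qed

lemma LL_B:
  assumes ke: "kbasis e1 e2 e3" and eqy: "Rspan v y g2 g3 = Rspan v e1 e2 e3"
    and y: "y = lincomb 1 b c e1 e2 e3" and bR: "b \<in> R" and cR: "c \<in> R"
    and s: "0 < s" and u: "0 < u"
    and bn: "b = 0 \<or> 1 \<le> v b" and cn: "c = 0 \<or> 1 \<le> v c"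
  shows "concl v p (Rspan v e1 e2 e3) (Rspan v e1 (P s e2) (P s e3)) (Rspan v y (P u g2) (P u g3))"
proof (cases "c = 0 \<or> (b \<noteq> 0 \<and> v b \<le> v c)")
  case True then show ?thesis using LL_C assms by blast
next
  case False
  then have W: "b = 0 \<or> (c \<noteq> 0 \<and> v c \<le> v b)" by auto
  have "concl v p (Rspan v e1 e3 e2) (Rspan v e1 (P s e3) (P s e2)) (Rspan v y (P u g2) (P u g3))"
    by (rule LL_C[OF kb_perm23[OF ke] _ _ cR bR W s u cn])
      (use eqy y in \<open>simp_all add: Rspan_perm23[of e1 e3 e2] lc_perm23\<close>)
  then show ?thesis unfolding Rspan_perm23[of e1 e3 e2] Rspan_perm23[of e1 "P s e3" "P s e2"] .
qed

lemma LL: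
  assumes ke: "kbasis e1 e2 e3" and kf: "kbasis f1 f2 f3" and eq: "Rspan v f1 f2 f3 = Rspan v e1 e2 e3"
    and s: "0 < s" and u: "0 < u"
  shows "concl v p (Rspan v e1 e2 e3) (Rspan v e1 (P s e2) (P s e3)) (Rspan v f1 (P u f2) (P u f3))"
proof -
  obtain a b c where y: "f1 = lincomb a b c e1 e2 e3" using ke unfolding kbasis_def by blast
  have f1m: "f1 \<in> Rspan v e1 e2 e3" using gen1[of f1 f2 f3] eq by simp
  have R: "a \<in> R" "b \<in> R" "c \<in> R" using coeffsR[OF ke f1m y] by auto
  have pr: "U a \<or> U b \<or> U c" by (rule prim[OF kf ke eq y])
  consider "U b" | "U c" | "U a" "\<not> U b" "\<not> U c" using pr by blast
  then show ?thesis
  proof cases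
    case 1 then show ?thesis using LL_A[OF ke kf eq _ _ y 1 R(1,3)] s u by simp
  next
    case 2
    have "concl v p (Rspan v e1 e3 e2) (Rspan v e1 (P s e3) (P s e2)) (Rspan v f1 (P u f2) (P u f3))"
      by (rule LL_A[OF kb_perm23[OF ke] kf _ _ _ _ 2 R(1,2)])
        (use eq y s u in \<open>simp_all add: Rspan_perm23[of e1 e3 e2] lc_perm23\<close>)
    then show ?thesis unfolding Rspan_perm23[of e1 e3 e2] Rspan_perm23[of e1 "P s e3" "P s e2"] .
  next
    case 3
    define y0 where "y0 = sm (1/a) f1"
    have Ua: "U (1/a)" using 3(1) by (simp add: U_def vdiv v1)
    have a0: "a \<noteq> 0" using 3(1) U_nz by auto
    have y0v: "y0 = lincomb 1 (b/a) (c/a) e1 e2 e3" using a0 by (simp add: y0_def y vec_eq_iff field_simps)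
    have "Rspan v y0 f2 f3 = Rspan v f1 f2 f3"
      by (rule Rspan_rep1[OF Ua, where b=0 and c=0]) (simp_all add: y0_def vec_eq_iff)
    then have eqy: "Rspan v y0 f2 f3 = Rspan v e1 e2 e3" using eq by simp
    have L3: "Rspan v y0 (P u f2) (P u f3) = Rspan v f1 (P u f2) (P u f3)"
      by (rule Rspan_rep1[OF Ua, where b=0 and c=0]) (simp_all add: y0_def vec_eq_iff)
    have nu: "x \<in> R \<Longrightarrow> \<not> U x \<Longrightarrow> x / a \<in> R \<and> (x / a = 0 \<or> 1 \<le> v (x / a))" for x
      using R_cases[of x] 3(1) a0 by (cases "x = 0") (auto simp: vdiv U_def memR)
    have "concl v p (Rspan v e1 e2 e3) (Rspan v e1 (P s e2) (P s e3)) (Rspan v y0 (P u f2) (P u f3))"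
      by (rule LL_B[OF ke eqy y0v]) (use nu R 3 s u in auto)
    then show ?thesis unfolding L3 .
  qed
qed

lemma LP_A:
  assumes ke: "kbasis e1 e2 e3" and kf: "kbasis f1 f2 f3" and eq: "Rspan v f1 f2 f3 = Rspan v e1 e2 e3"
    and s: "0 \<le> s" and u: "0 \<le> u"
    and x: "e1 = lincomb a b c f1 f2 f3" and c: "U c" and ab: "a \<in> R" "b \<in> R"
  shows "concl v p (Rspan v e1 e2 e3) (Rspan v e1 (P s e2) (P s e3)) (Rspan v f1 f2 (P u f3))"
proof (rule apart3[where ?f1.0=f1 and ?f2.0=f2 and ?f3.0=e1 and ?a1.0=s and ?a2.0=s and ?a3.0=0 and ?b1.0=0 and ?b2.0=0 and ?b3.0=u])
  show "kbasis f1 f2 e1" by (rule kb_rep3[OF kf U_nz[OF c] x])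
  have r: "Rspan v f1 f2 e1 = Rspan v f1 f2 f3" by (rule Rspan_rep3[OF c ab x])
  then show "Rspan v e1 e2 e3 = Rspan v f1 f2 e1" using eq by simp
  have "Rspan v e1 f1 f2 = Rspan v f1 e1 f2" by (rule Rspan_perm12)
  also have "\<dots> = Rspan v f1 f2 e1" by (rule Rspan_perm23)
  also have "\<dots> = Rspan v e1 e2 e3" using r eq by simp
  finally have "Rspan v e1 (P s f1) (P s f2) = Rspan v e1 (P s e2) (P s e3)"
    by (rule tr_line) (use s in simp)
  moreover have "Rspan v (P s f1) (P s f2) e1 = Rspan v (P s f1) e1 (P s f2)" by (rule Rspan_perm23)
  moreover have "Rspan v (P s f1) e1 (P s f2) = Rspan v e1 (P s f1) (P s f2)" by (rule Rspan_perm12)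
  ultimately show "Rspan v e1 (P s e2) (P s e3) = Rspan v (P s f1) (P s f2) (P 0 e1)" by simp
  have "Rspan v f1 f2 (P u e1) = Rspan v f1 f2 (P u f3)"
    by (rule Rspan_rep3[OF c, where a="p powi u * a" and b="p powi u * b"])
      (use ab u in \<open>auto simp: x vec_eq_iff algebra_simps\<close>)
  then show "Rspan v f1 f2 (P u f3) = Rspan v (P 0 f1) (P 0 f2) (P u e1)" by simp
qed

lemma LP_B:
  assumes ke: "kbasis e1 e2 e3" and kf: "kbasis f1 f2 f3" and eq: "Rspan v f1 f2 f3 = Rspan v e1 e2 e3"
    and s: "0 < s" and u: "0 < u"
    and x: "e1 = lincomb a b c f1 f2 f3" and a: "U a" and bR: "b \<in> R" and cR: "c \<in> R"
    and cn: "c = 0 \<or> 1 \<le> v c"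
  shows "concl v p (Rspan v e1 e2 e3) (Rspan v e1 (P s e2) (P s e3)) (Rspan v f1 f2 (P u f3))"
proof -
  have k1: "kbasis e1 f2 f3" by (rule kb_rep1[OF kf U_nz[OF a] x])
  have r1: "Rspan v e1 f2 f3 = Rspan v e1 e2 e3" using Rspan_rep1[OF a bR cR x] eq by simp
  have L2': "Rspan v e1 (P s f2) (P s f3) = Rspan v e1 (P s e2) (P s e3)"
    by (rule tr_line[OF r1]) (use s in simp)
  define w where "w = lincomb a b 0 f1 f2 f3"
  have wv: "w = e1 - sm c f3" by (simp add: w_def x vec_eq_iff)
  have L3w: "Rspan v w f2 (P u f3) = Rspan v f1 f2 (P u f3)"
    by (rule Rspan_rep1[OF a bR R0]) (simp add: w_def vec_eq_iff)
  consider "c = 0 \<or> u \<le> v c" | "c \<noteq> 0" "s \<le> v c" | "c \<noteq> 0" "v c < s" "v c < u" by linarith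
  then show ?thesis
  proof cases
    case 1
    have "Rspan v e1 f2 (P u f3) = Rspan v f1 f2 (P u f3)"
      by (rule Rspan_rep1[OF a bR, where c="c / p powi u"])
        (use 1 in \<open>auto intro!: R_pow_div simp: x vec_eq_iff field_simps\<close>)
    then show ?thesis
      by (intro apart3[where ?f1.0=e1 and ?f2.0=f2 and ?f3.0=f3 and ?a1.0=0 and ?a2.0=s and ?a3.0=s and ?b1.0=0 and ?b2.0=0 and ?b3.0=u] k1)
        (simp_all add: r1 L2')
  next
    case 2
    have kw: "kbasis w f2 f3" by (rule kb_rep1[OF kf U_nz[OF a] w_def])
    have rw: "Rspan v w f2 f3 = Rspan v e1 e2 e3" using Rspan_rep1[OF a bR R0 w_def] eq by simp
    have "Rspan v w (P s f2) (P s f3) = Rspan v e1 (P s f2) (P s f3)"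
      by (rule Rspan_rep1[OF U_1 R0, where c="- (c / p powi s)"])
        (use 2 in \<open>auto intro!: R_pow_div simp: wv vec_eq_iff field_simps\<close>)
    then show ?thesis
      by (intro apart3[where ?f1.0=w and ?f2.0=f2 and ?f3.0=f3 and ?a1.0=0 and ?a2.0=s and ?a3.0=s and ?b1.0=0 and ?b2.0=0 and ?b3.0=u] kw)
        (simp_all add: rw L2' L3w)
  next
    case 3
    define t where "t = v c"
    have t1: "1 \<le> t" using cn 3 t_def by auto
    define E3 where "E3 = lincomb 0 0 (- (c / p powi t)) e1 f2 f3"
    have UE: "U (- (c / p powi t))" using U_neg[OF U_pow_div[OF 3(1)]] t_def by simp
    have kE: "kbasis e1 f2 E3" by (rule kb_rep3[OF k1 U_nz[OF UE] E3_def])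
    have rE: "Rspan v e1 f2 E3 = Rspan v e1 e2 e3" using Rspan_rep3[OF UE R0 R0 E3_def] r1 by simp
    have A: "Rspan v e1 (P s f2) (P s E3) = Rspan v e1 (P s f2) (P s f3)"
      by (rule Rspan_rep3[OF UE R0 R0]) (simp add: E3_def vec_eq_iff algebra_simps)
    have B: "Rspan v w f2 (P u E3) = Rspan v w f2 (P u f3)"
      by (rule Rspan_rep3[OF UE R0 R0]) (simp add: E3_def vec_eq_iff algebra_simps)
    have wE: "w = e1 + P t E3" by (simp add: wv E3_def vec_eq_iff field_simps)
    have G2: "Rspan v e1 (P s e2) (P s e3) = Rspan v e1 (P s f2) (P s E3)" using A L2' by simp
    have G3: "Rspan v f1 f2 (P u f3) = Rspan v (e1 + P t E3) f2 (P u E3)" using B L3w wE by simp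
    show ?thesis
      by (rule form2[OF kE rE[symmetric] _ _ _ G2 G3]) (use t1 3 t_def in auto)
  qed
qed

lemma LP:
  assumes ke: "kbasis e1 e2 e3" and kf: "kbasis f1 f2 f3" and eq: "Rspan v f1 f2 f3 = Rspan v e1 e2 e3"
    and s: "0 < s" and u: "0 < u"
  shows "concl v p (Rspan v e1 e2 e3) (Rspan v e1 (P s e2) (P s e3)) (Rspan v f1 f2 (P u f3))"
proof -
  obtain a b c where x: "e1 = lincomb a b c f1 f2 f3" using kf unfolding kbasis_def by blast
  have e1m: "e1 \<in> Rspan v f1 f2 f3" using gen1[of e1 e2 e3] eq by simp
  have R: "a \<in> R" "b \<in> R" "c \<in> R" using coeffsR[OF kf e1m x] by auto
  have pr: "U a \<or> U b \<or> U c" by (rule prim[OF ke kf eq[symmetric] x])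
  have cn: "\<not> U c \<Longrightarrow> c = 0 \<or> 1 \<le> v c" using R_cases[OF R(3)] by auto
  consider "U c" | "U a" "\<not> U c" | "U b" "\<not> U c" using pr by blast
  then show ?thesis
  proof cases
    case 1 then show ?thesis using LP_A[OF ke kf eq _ _ x 1 R(1,2)] s u by simp
  next
    case 2 then show ?thesis using LP_B[OF ke kf eq s u x 2(1) R(2,3) cn] by simp
  next
    case 3
    have "concl v p (Rspan v e1 e2 e3) (Rspan v e1 (P s e2) (P s e3)) (Rspan v f2 f1 (P u f3))"
      by (rule LP_B[OF ke kb_perm12[OF kf] _ s u _ 3(1) R(1,3) cn[OF 3(2)]])
        (use eq x in \<open>simp_all add: Rspan_perm12[of f2 f1 f3] lc_perm12\<close>)
    then show ?thesis unfolding Rspan_perm12[of f2 f1 "P u f3"] .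
  qed
qed

lemma PP_C:
  assumes ke: "kbasis e1 e2 e3" and kf: "kbasis f1 f2 f3" and eq: "Rspan v f1 f2 f3 = Rspan v e1 e2 e3"
    and s: "0 < s" and u: "0 < u"
    and f2: "f2 = lincomb \<alpha> \<beta> 0 e1 e2 e3" and Ua: "U \<alpha>" and bR: "\<beta> \<in> R"
    and f1: "f1 = lincomb a1 b1 c1 e1 e2 e3" and R1: "a1 \<in> R" "b1 \<in> R" "c1 \<in> R"
  shows "concl v p (Rspan v e1 e2 e3) (Rspan v e1 e2 (P s e3)) (Rspan v f1 f2 (P u f3))"
proof -
  have a0: "\<alpha> \<noteq> 0" using U_nz[OF Ua] .
  have kN: "kbasis e2 f2 e3" using kb_perm12[OF kb_rep1[OF ke a0 f2]] .
  have "Rspan v e2 f2 e3 = Rspan v f2 e2 e3" by (rule Rspan_perm12)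
  also have "\<dots> = Rspan v e1 e2 e3" by (rule Rspan_rep1[OF Ua bR R0 f2])
  finally have rN: "Rspan v e2 f2 e3 = Rspan v e1 e2 e3" .
  have "Rspan v e2 f2 (P s e3) = Rspan v f2 e2 (P s e3)" by (rule Rspan_perm12)
  also have "\<dots> = Rspan v e1 e2 (P s e3)"
    by (rule Rspan_rep1[OF Ua bR R0]) (simp add: f2 vec_eq_iff)
  finally have L2N: "Rspan v e2 f2 (P s e3) = Rspan v e1 e2 (P s e3)" .
  define B where "B = a1 / \<alpha>"
  define A where "A = b1 - a1 * \<beta> / \<alpha>"
  have BR: "B \<in> R" using R1 U_inv'[OF Ua] unfolding B_def
    by (metis R_mult times_divide_eq_right mult_1_right)
  have AR: "A \<in> R" using R1 bR U_inv'[OF Ua] unfolding A_def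
    by (metis R_mult R_diff times_divide_eq_right mult_1_right)
  have f1N: "f1 = lincomb A B c1 e2 f2 e3"
    using a0 by (simp add: f1 f2 A_def B_def vec_eq_iff field_simps)
  define g where "g = lincomb 1 (- B) 0 f1 f2 f3"
  have gN: "g = lincomb A 0 c1 e2 f2 e3" by (simp add: g_def f1N vec_eq_iff algebra_simps)
  have kg: "kbasis g f2 f3" by (rule kb_rep1[OF kf _ g_def]) simp
  have rg: "Rspan v g f2 f3 = Rspan v e1 e2 e3" using Rspan_rep1[OF U_1 _ R0 g_def] BR eq by simp
  have L3g: "Rspan v g f2 (P u f3) = Rspan v f1 f2 (P u f3)"
    by (rule Rspan_rep1[OF U_1 _ R0, where b="- B"]) (simp_all add: BR g_def vec_eq_iff)
  have pr: "U A \<or> U 0 \<or> U c1" by (rule prim[OF kg kN _ gN]) (simp add: rg rN)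
  show ?thesis
  proof (cases "U c1")
    case True
    have r3: "Rspan v e2 f2 f1 = Rspan v e1 e2 e3" using Rspan_rep3[OF True AR BR f1N] rN by simp
    have "Rspan v f1 f2 e2 = Rspan v f2 f1 e2" by (rule Rspan_perm12)
    also have "\<dots> = Rspan v f2 e2 f1" by (rule Rspan_perm23)
    also have "\<dots> = Rspan v e2 f2 f1" by (rule Rspan_perm12)
    also have "\<dots> = Rspan v f1 f2 f3" using r3 eq by simp
    finally have "Rspan v f1 f2 (P u e2) = Rspan v f1 f2 (P u f3)" by (rule tr_plane) (use u in simp)
    moreover have "Rspan v (P u e2) f2 f1 = Rspan v f2 (P u e2) f1" by (rule Rspan_perm12)
    moreover have "Rspan v f2 (P u e2) f1 = Rspan v f2 f1 (P u e2)" by (rule Rspan_perm23)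
    moreover have "Rspan v f2 f1 (P u e2) = Rspan v f1 f2 (P u e2)" by (rule Rspan_perm12)
    ultimately have L3: "Rspan v f1 f2 (P u f3) = Rspan v (P u e2) (P 0 f2) (P 0 f1)" by simp
    have "Rspan v e2 f2 (P s f1) = Rspan v e2 f2 (P s e3)"
      by (rule Rspan_rep3[OF True, where a="p powi s * A" and b="p powi s * B"])
        (use AR BR s in \<open>auto simp: f1N vec_eq_iff algebra_simps\<close>)
    with L2N have L2: "Rspan v e1 e2 (P s e3) = Rspan v (P 0 e2) (P 0 f2) (P s f1)" by simp
    show ?thesis
      by (rule apart3[OF kb_rep3[OF kN U_nz[OF True] f1N] _ L2 L3]) (simp add: r3)
  next
    case False
    with pr have UA: "U A" by (auto simp: U_def)
    have A0: "A \<noteq> 0" using U_nz[OF UA] .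
    have cn: "c1 = 0 \<or> 1 \<le> v c1" using R_cases[OF R1(3)] False by auto
    define E1 where "E1 = lincomb 1 0 (c1 / A) e2 f2 e3"
    have cA: "c1 / A \<in> R" using R1 U_inv'[OF UA] by (metis R_mult times_divide_eq_right mult_1_right)
    have kE: "kbasis E1 f2 e3" by (rule kb_rep1[OF kN _ E1_def]) simp
    have rE: "Rspan v E1 f2 e3 = Rspan v e1 e2 e3" using Rspan_rep1[OF U_1 R0 cA E1_def] rN by simp
    have E1g: "E1 = lincomb (1/A) 0 0 g f2 f3" using A0 by (simp add: E1_def gN vec_eq_iff field_simps)
    have UiA: "U (1/A)" using UA by (simp add: U_def vdiv v1)
    have L3E: "Rspan v E1 f2 (P u f3) = Rspan v g f2 (P u f3)"
      by (rule Rspan_rep1[OF UiA R0 R0]) (simp add: E1g vec_eq_iff)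
    have rEf: "Rspan v E1 f2 f3 = Rspan v g f2 f3" by (rule Rspan_rep1[OF UiA R0 R0 E1g])
    have "Rspan v E1 f2 (P u e3) = Rspan v E1 f2 (P u f3)"
      by (rule tr_plane) (use rE rEf rg u in simp_all)
    with L3E L3g have L3: "Rspan v f1 f2 (P u f3) = Rspan v E1 f2 (P u e3)" by simp
    consider "c1 = 0 \<or> s \<le> v c1" | "c1 \<noteq> 0" "u \<le> v c1" | "c1 \<noteq> 0" "v c1 < s" "v c1 < u" by linarith
    then show ?thesis
    proof cases
      case 1
      have "Rspan v E1 f2 (P s e3) = Rspan v e2 f2 (P s e3)"
        by (rule Rspan_rep1[OF U_1 R0, where c="c1 / (A * p powi s)"])
          (use 1 UA A0 in \<open>auto intro!: R_upow_div simp: E1_def vec_eq_iff field_simps\<close>)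
      with L2N have L2: "Rspan v e1 e2 (P s e3) = Rspan v (P 0 E1) (P 0 f2) (P s e3)" by simp
      show ?thesis
        by (rule apart3[OF kE _ L2, where ?b1.0=0 and ?b2.0=0 and ?b3.0=u]) (simp_all add: rE L3)
    next
      case 2
      have "Rspan v E1 f2 (P u e3) = Rspan v e2 f2 (P u e3)"
        by (rule Rspan_rep1[OF U_1 R0, where c="c1 / (A * p powi u)"])
          (use 2 UA A0 in \<open>auto intro!: R_upow_div simp: E1_def vec_eq_iff field_simps\<close>)
      with L3 have L3': "Rspan v f1 f2 (P u f3) = Rspan v (P 0 e2) (P 0 f2) (P u e3)" by simp
      have L2: "Rspan v e1 e2 (P s e3) = Rspan v (P 0 e2) (P 0 f2) (P s e3)" using L2N by simp
      show ?thesis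
        by (rule apart3[OF kN _ L2 L3']) (simp add: rN)
    next
      case 3
      define t where "t = v c1"
      have t1: "1 \<le> t" using cn 3 t_def by auto
      define E3 where "E3 = lincomb 0 0 (c1 / (A * p powi t)) e2 f2 e3"
      have UE: "U (c1 / (A * p powi t))" using U_upow_div[OF UA 3(1)] t_def by simp
      have kE3: "kbasis e2 f2 E3" by (rule kb_rep3[OF kN U_nz[OF UE] E3_def])
      have rE3: "Rspan v e2 f2 E3 = Rspan v e1 e2 e3" using Rspan_rep3[OF UE R0 R0 E3_def] rN by simp
      have A': "Rspan v e2 f2 (P s E3) = Rspan v e2 f2 (P s e3)"
        by (rule Rspan_rep3[OF UE R0 R0]) (simp add: E3_def vec_eq_iff algebra_simps)
      have B': "Rspan v E1 f2 (P u E3) = Rspan v E1 f2 (P u e3)"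
        by (rule Rspan_rep3[OF UE R0 R0]) (simp add: E3_def vec_eq_iff algebra_simps)
      have E1v: "E1 = e2 + P t E3" using A0 by (simp add: E1_def E3_def vec_eq_iff field_simps)
      have G2: "Rspan v e1 e2 (P s e3) = Rspan v e2 f2 (P s E3)" using A' L2N by simp
      have G3: "Rspan v f1 f2 (P u f3) = Rspan v (e2 + P t E3) f2 (P u E3)" using B' L3 E1v by simp
      show ?thesis
        by (rule form3[OF kE3 rE3[symmetric] _ _ _ G2 G3]) (use t1 3 t_def in auto)
    qed
  qed
qed

lemma PP_B:
  assumes ke: "kbasis e1 e2 e3" and kf: "kbasis f1 f2 f3" and eq: "Rspan v f1 f2 f3 = Rspan v e1 e2 e3"
    and s: "0 < s" and u: "0 < u"
    and f2: "f2 = lincomb \<alpha> \<beta> 0 e1 e2 e3" and aR: "\<alpha> \<in> R" and bR: "\<beta> \<in> R" and Uab: "U \<alpha> \<or> U \<beta>"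
    and f1: "f1 = lincomb a1 b1 c1 e1 e2 e3" and R1: "a1 \<in> R" "b1 \<in> R" "c1 \<in> R"
  shows "concl v p (Rspan v e1 e2 e3) (Rspan v e1 e2 (P s e3)) (Rspan v f1 f2 (P u f3))"
proof (cases "U \<alpha>")
  case True show ?thesis using PP_C[OF ke kf eq s u f2 True bR f1 R1] .
next
  case False
  with Uab have Ub: "U \<beta>" by simp
  have "concl v p (Rspan v e2 e1 e3) (Rspan v e2 e1 (P s e3)) (Rspan v f1 f2 (P u f3))"
    by (rule PP_C[OF kb_perm12[OF ke] kf _ s u _ Ub aR _ R1(2,1,3)])
      (use eq f1 f2 in \<open>simp_all add: Rspan_perm12[of e2 e1 e3] lc_perm12\<close>)
  then show ?thesis unfolding Rspan_perm12[of e2 e1 e3] Rspan_perm12[of e2 e1 "P s e3"] .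
qed

lemma PP_W:
  assumes ke: "kbasis e1 e2 e3" and kf: "kbasis f1 f2 f3" and eq: "Rspan v f1 f2 f3 = Rspan v e1 e2 e3"
    and s: "0 < s" and u: "0 < u"
    and f1: "f1 = lincomb a1 b1 c1 e1 e2 e3" and R1: "a1 \<in> R" "b1 \<in> R" "c1 \<in> R"
    and f2: "f2 = lincomb a2 b2 c2 e1 e2 e3" and R2: "a2 \<in> R" "b2 \<in> R" "c2 \<in> R"
    and W: "c2 = 0 \<or> (c1 \<noteq> 0 \<and> v c1 \<le> v c2)"
  shows "concl v p (Rspan v e1 e2 e3) (Rspan v e1 e2 (P s e3)) (Rspan v f1 f2 (P u f3))"
proof -
  define k where "k = c2 / c1"
  have kR: "k \<in> R" unfolding k_def using W by (intro R_div) auto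
  have kc: "c2 - k * c1 = 0" using W by (auto simp: k_def)
  define f2' where "f2' = lincomb (- k) 1 0 f1 f2 f3"
  have kf': "kbasis f1 f2' f3" by (rule kb_rep2[OF kf _ f2'_def]) simp
  have rf': "Rspan v f1 f2' f3 = Rspan v e1 e2 e3" using Rspan_rep2[OF U_1 _ R0 f2'_def] kR eq by simp
  have L3': "Rspan v f1 f2' (P u f3) = Rspan v f1 f2 (P u f3)"
    by (rule Rspan_rep2[OF U_1 _ R0, where a="- k"]) (simp_all add: kR f2'_def vec_eq_iff)
  have f2e: "f2' = lincomb (a2 - k * a1) (b2 - k * b1) 0 e1 e2 e3"
  proof -
    have "f2' = lincomb (a2 - k * a1) (b2 - k * b1) (c2 - k * c1) e1 e2 e3"
      by (simp add: f2'_def f1 f2 vec_eq_iff algebra_simps)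
    then show ?thesis using kc by simp
  qed
  have pr: "U (a2 - k * a1) \<or> U (b2 - k * b1) \<or> U 0"
    by (rule prim[OF kb_perm12[OF kf'] ke _ f2e]) (use rf' Rspan_perm12[of f2' f1 f3] in simp)
  have "concl v p (Rspan v e1 e2 e3) (Rspan v e1 e2 (P s e3)) (Rspan v f1 f2' (P u f3))"
    by (rule PP_B[OF ke kf' rf' s u f2e _ _ _ f1 R1]) (use pr kR R1 R2 in \<open>auto simp: U_def\<close>)
  then show ?thesis unfolding L3' .
qed

lemma PP:
  assumes ke: "kbasis e1 e2 e3" and kf: "kbasis f1 f2 f3" and eq: "Rspan v f1 f2 f3 = Rspan v e1 e2 e3"
    and s: "0 < s" and u: "0 < u"
  shows "concl v p (Rspan v e1 e2 e3) (Rspan v e1 e2 (P s e3)) (Rspan v f1 f2 (P u f3))"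
proof -
  obtain a1 b1 c1 where f1: "f1 = lincomb a1 b1 c1 e1 e2 e3" using ke unfolding kbasis_def by blast
  obtain a2 b2 c2 where f2: "f2 = lincomb a2 b2 c2 e1 e2 e3" using ke unfolding kbasis_def by blast
  have m1: "f1 \<in> Rspan v e1 e2 e3" using gen1[of f1 f2 f3] eq by simp
  have m2: "f2 \<in> Rspan v e1 e2 e3" using gen2[of f2 f1 f3] eq by simp
  have R1: "a1 \<in> R" "b1 \<in> R" "c1 \<in> R" using coeffsR[OF ke m1 f1] by auto
  have R2: "a2 \<in> R" "b2 \<in> R" "c2 \<in> R" using coeffsR[OF ke m2 f2] by auto
  show ?thesis
  proof (cases "c2 = 0 \<or> (c1 \<noteq> 0 \<and> v c1 \<le> v c2)")
    case True then show ?thesis using PP_W[OF ke kf eq s u f1 R1 f2 R2] by blast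
  next
    case False
    then have W: "c1 = 0 \<or> (c2 \<noteq> 0 \<and> v c2 \<le> v c1)" by auto
    have "concl v p (Rspan v e1 e2 e3) (Rspan v e1 e2 (P s e3)) (Rspan v f2 f1 (P u f3))"
      by (rule PP_W[OF ke kb_perm12[OF kf] _ s u f2 R2 f1 R1 W])
        (use eq in \<open>simp add: Rspan_perm12[of f2 f1 f3]\<close>)
    then show ?thesis unfolding Rspan_perm12[of f2 f1 "P u f3"] .
  qed
qed

lemma hom_norm:
  "homothetic (Rspan v e1 (P (m2-m1) e2) (P (m3-m1) e3)) (Rspan v (P m1 e1) (P m2 e2) (P m3 e3))"
proof -
  have a: "p powi m1 * p powi (m2 - m1) = p powi m2" "p powi m1 * p powi (m3 - m1) = p powi m3"
    by (simp_all add: power_int_add[symmetric])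
  show ?thesis unfolding homothetic_def
    by (rule exI[of _ "p powi m1"]) (simp add: sm_image_Rspan sm_sm a)
qed

lemma unbent_norm:
  assumes "unbent v p L1 L2" "\<not> homothetic L1 L2"
  obtains e1 e2 e3 s where "kbasis e1 e2 e3" "L1 = Rspan v e1 e2 e3" "0 < s"
      "homothetic L2 (Rspan v e1 (P s e2) (P s e3))"
    | e1 e2 e3 s where "kbasis e1 e2 e3" "L1 = Rspan v e1 e2 e3" "0 < s"
      "homothetic L2 (Rspan v e1 e2 (P s e3))"
proof -
  obtain e1 e2 e3 m1 m2 m3 where k: "kbasis e1 e2 e3" and L1: "L1 = Rspan v e1 e2 e3"
    and L2: "L2 = Rspan v (P m1 e1) (P m2 e2) (P m3 e3)" and m: "m1 \<le> m2" "m2 \<le> m3" "\<not> (m1 < m2 \<and> m2 < m3)"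
    using assms(1) unfolding unbent_def by blast
  have h: "homothetic L2 (Rspan v e1 (P (m2-m1) e2) (P (m3-m1) e3))"
    unfolding L2 by (rule hom_sym[OF hom_norm])
  consider "m1 = m2" "m2 = m3" | "m1 = m2" "m2 < m3" | "m1 < m2" "m2 = m3" using m by linarith
  then show ?thesis
  proof cases
    case 1
    then have "homothetic L2 L1" using h L1 by simp
    then show ?thesis using assms(2) hom_sym by blast
  next
    case 2
    then show ?thesis using that(2)[OF k L1, of "m3 - m1"] h by simp
  next
    case 3
    then show ?thesis using that(1)[OF k L1, of "m2 - m1"] h by simp
  qed
qed

lemma concl_hom3: "concl v p L1 L2 L3 \<Longrightarrow> homothetic L3 L3' \<Longrightarrow> concl v p L1 L2 L3'"
  by (meson concl_sym concl_hom2)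

lemma main_concl:
  assumes "unbent v p L1 L2" "\<not> homothetic L1 L2" "unbent v p L1 L3" "\<not> homothetic L1 L3"
  shows "concl v p L1 L2 L3"
proof -
  have fin: "concl v p L1 L2 L3" if c: "concl v p L1 X Y" and "homothetic L2 X" "homothetic L3 Y" for X Y
    using concl_hom3[OF concl_hom2[OF c hom_sym] hom_sym] that by blast
  show ?thesis
  using assms(1,2)
  proof (cases rule: unbent_norm)
    case (1 e1 e2 e3 s)
    note E = this
    from assms(3,4) show ?thesis
    proof (cases rule: unbent_norm)
      case (1 f1 f2 f3 u)
      have "concl v p L1 (Rspan v e1 (P s e2) (P s e3)) (Rspan v f1 (P u f2) (P u f3))"
        using LL[OF E(1) 1(1) _ E(3) 1(3)] E(2) 1(2) by simp
      then show ?thesis using fin E(4) 1(4) by blast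
    next
      case (2 f1 f2 f3 u)
      have "concl v p L1 (Rspan v e1 (P s e2) (P s e3)) (Rspan v f1 f2 (P u f3))"
        using LP[OF E(1) 2(1) _ E(3) 2(3)] E(2) 2(2) by simp
      then show ?thesis using fin E(4) 2(4) by blast
    qed
  next
    case (2 e1 e2 e3 s)
    note E = this
    from assms(3,4) show ?thesis
    proof (cases rule: unbent_norm)
      case (1 f1 f2 f3 u)
      have "concl v p L1 (Rspan v f1 (P u f2) (P u f3)) (Rspan v e1 e2 (P s e3))"
        using LP[OF 1(1) E(1) _ 1(3) E(3)] E(2) 1(2) by simp
      then show ?thesis using fin E(4) 1(4) concl_sym by blast
    next
      case (2 f1 f2 f3 u)
      have "concl v p L1 (Rspan v e1 e2 (P s e3)) (Rspan v f1 f2 (P u f3))"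
        using PP[OF E(1) 2(1) _ E(3) 2(3)] E(2) 2(2) by simp
      then show ?thesis using fin E(4) 2(4) by blast
    qed
  qed
qed

end

theorem mainTheorem18:
  fixes v :: "'a::field \<Rightarrow> int" and \<pi> :: 'a
    and L1 L2 L3 :: "('a^3) set"
  assumes "discrete_valuation v" and "\<pi> \<noteq> 0" and "v \<pi> = 1"
    and "is_lattice v L1" and "is_lattice v L2" and "is_lattice v L3"
    and "\<not> homothetic L1 L2" and "\<not> homothetic L1 L3" and "\<not> homothetic L2 L3"
    and "unbent v \<pi> L1 L2" and "unbent v \<pi> L1 L3"
  shows "in_apartment v \<pi> {L1, L2, L3} \<or>
    (\<exists>e1 e2 e3 t s u. kbasis e1 e2 e3 \<and> L1 = Rspan v e1 e2 e3 \<and>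
       0 < t \<and> t < s \<and> t < u \<and>
       (\<exists>A B. ((homothetic L2 A \<and> homothetic L3 B) \<or> (homothetic L3 A \<and> homothetic L2 B)) \<and>
         ((A = Rspan v e1 (sm (\<pi> powi s) e2) (sm (\<pi> powi s) e3) \<and>
           B = Rspan v (e1 + sm (\<pi> powi t) e2) (sm (\<pi> powi u) e2) (sm (\<pi> powi u) e3)) \<or>
          (A = Rspan v e1 (sm (\<pi> powi s) e2) (sm (\<pi> powi s) e3) \<and>
           B = Rspan v (e1 + sm (\<pi> powi t) e3) e2 (sm (\<pi> powi u) e3)) \<or>
          (A = Rspan v e1 e2 (sm (\<pi> powi s) e3) \<and>
           B = Rspan v (e1 + sm (\<pi> powi t) e3) e2 (sm (\<pi> powi u) e3)))))"
proof -
  interpret dvr v \<pi> using assms(1-3) by unfold_locales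
  have "concl v \<pi> L1 L2 L3" by (rule main_concl) (use assms in auto)
  then show ?thesis unfolding concl_def forms_def .
qed


end
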